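(* Let $q\ge3$, $G\in\mathbb G^q$, and let $C$ be the core of $S=\Psi(G)$. Suppose every white vertex of $C$ either has valency strictly smaller than $q$ in $C$, or is incident in $C$ to a core-chain containing at least one internal white vertex. Then $G$ is an SYK graph.
   Context: Fix an integer $q\ge 2$. A $(q+1)$-edge-colored graph (colored graph) is a finite connected graph, multiple edges allowed and no loops, whose edges carry colors in $\{0,1,\dots,q\}$ such that every vertex is incident to exactly one edge of each color. It is rooted if one color-0 edge is distinguished and oriented; it is bipartite if its vertices can be colored black and white so that every edge joins a black and a white vertex, with the convention that the origin of the root edge is black. $\mathbb G^q$ denotes the set of rooted bipartite colored graphs. $G_{\hat 0}$ denotes the graph obtained from $G$ by deleting all color-0 edges; $G$ is an SYK graph if $G_{\hat 0}$ is connected. Constellations: given $G\in\mathbb G^q$, its constellation $S=\Psi(G)$ is obtained as follows: orient every edge from its black to its white endpoint; contract every color-0 edge into a single vertex, called a white vertex of $S$ (the one coming from the root edge is the root vertex). For each $i\in\{1,\dots,q\}$ the color-$i$ edges now form directed cycles; for each such cycle, passing through white vertices $w_1,\dots,w_p$ in this cyclic order, add a new vertex of color $i$ joined by one color-$i$ edge to each $w_k$, equip the new vertex with the cyclic order $(w_1,\dots,w_p)$ of its incident edges, and delete the original color-$i$ edges of the cycle. Core: the core $C$ of $S$ is obtained by repeatedly deleting a vertex of degree $1$ other than the root vertex, together with its incident edge, until every non-root vertex has degree at least 2. A chain-vertex of $C$ is a non-root vertex of degree $2$ in $C$; a core-chain is a path of $C$ (possibly closed) whose internal vertices are chain-vertices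 and whose extremities are not chain-vertices. *)

theory Defs
  imports Main
begin

text \<open>
Encoding of a rooted bipartite (q+1)-edge-colored graph G:
black vertices Bl, white vertices Wh (disjoint, finite); for each colour i in {0..q}
the colour-i edges form a perfect matching between Bl and Wh, encoded by the
bijection sig i : Bl -> Wh (the colour-i edge at black b joins b to sig i b).
Multiple edges are allowed (sig i b = sig j b for i ~= j), loops are impossible.
The root is the colour-0 edge at the black vertex r, oriented from r (black) to sig 0 r.
\<close>

definition col_edges :: "nat set \<Rightarrow> 'v set \<Rightarrow> (nat \<Rightarrow> 'v \<Rightarrow> 'v) \<Rightarrow> ('v \<times> 'v) set" where
  "col_edges cols Bl sig = {(b, sig i b) | i b. i \<in> cols \<and> b \<in> Bl}"

definition col_connected :: "nat set \<Rightarrow> 'v set \<Rightarrow> 'v set \<Rightarrow> (nat \<Rightarrow> 'v \<Rightarrow> 'v) \<Rightarrow> bool" where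
  "col_connected cols Bl Wh sig \<longleftrightarrow>
     (\<forall>x \<in> Bl \<union> Wh. \<forall>y \<in> Bl \<union> Wh.
        (x, y) \<in> (col_edges cols Bl sig \<union> (col_edges cols Bl sig)\<inverse>)\<^sup>*)"

definition rooted_bip_colored ::
  "nat \<Rightarrow> 'v set \<Rightarrow> 'v set \<Rightarrow> (nat \<Rightarrow> 'v \<Rightarrow> 'v) \<Rightarrow> 'v \<Rightarrow> bool" where
  "rooted_bip_colored q Bl Wh sig r \<longleftrightarrow>
     finite Bl \<and> finite Wh \<and> Bl \<inter> Wh = {} \<and>
     (\<forall>i \<le> q. bij_betw (sig i) Bl Wh) \<and>
     r \<in> Bl \<and> col_connected {0..q} Bl Wh sig"

definition SYK :: "nat \<Rightarrow> 'v set \<Rightarrow> 'v set \<Rightarrow> (nat \<Rightarrow> 'v \<Rightarrow> 'v) \<Rightarrow> bool" where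
  "SYK q Bl Wh sig \<longleftrightarrow> col_connected {1..q} Bl Wh sig"

text \<open>Contracting colour-0 edges identifies each white vertex of S with the
black endpoint of its colour-0 edge. The colour-i directed cycles then are the cycles of
the permutation pi i = (sig 0)^-1 o sig i of Bl.\<close>

definition cperm :: "'v set \<Rightarrow> (nat \<Rightarrow> 'v \<Rightarrow> 'v) \<Rightarrow> nat \<Rightarrow> 'v \<Rightarrow> 'v" where
  "cperm Bl sig i = inv_into Bl (sig 0) \<circ> sig i"

definition corbit :: "'v set \<Rightarrow> (nat \<Rightarrow> 'v \<Rightarrow> 'v) \<Rightarrow> nat \<Rightarrow> 'v \<Rightarrow> 'v set" where
  "corbit Bl sig i b = {(cperm Bl sig i ^^ n) b | n. True}"

text \<open>Vertices of S: white vertices SW b (b the black end of a colour-0 edge), and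
colour-i vertices SC i O (O the set of white vertices on a colour-i cycle).\<close>
datatype 'v svert = SW 'v | SC nat "'v set"

definition S_verts :: "nat \<Rightarrow> 'v set \<Rightarrow> (nat \<Rightarrow> 'v \<Rightarrow> 'v) \<Rightarrow> 'v svert set" where
  "S_verts q Bl sig = SW ` Bl \<union> {SC i (corbit Bl sig i b) | i b. 1 \<le> i \<and> i \<le> q \<and> b \<in> Bl}"

definition S_adj :: "nat \<Rightarrow> 'v set \<Rightarrow> (nat \<Rightarrow> 'v \<Rightarrow> 'v) \<Rightarrow> 'v svert \<Rightarrow> 'v svert \<Rightarrow> bool" where
  "S_adj q Bl sig x y \<longleftrightarrow>
     (\<exists>i b. 1 \<le> i \<and> i \<le> q \<and> b \<in> Bl \<and>
        ((x = SW b \<and> y = SC i (corbit Bl sig i b)) \<or> (y = SW b \<and> x = SC i (corbit Bl sig i b))))"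

text \<open>S is a simple graph, and deleting vertices with their incident edges leaves an
induced subgraph; hence a subgraph obtained by pruning is described by its vertex set U.\<close>

definition sdeg :: "nat \<Rightarrow> 'v set \<Rightarrow> (nat \<Rightarrow> 'v \<Rightarrow> 'v) \<Rightarrow> 'v svert set \<Rightarrow> 'v svert \<Rightarrow> nat" where
  "sdeg q Bl sig U v = card {u \<in> U. S_adj q Bl sig v u}"

definition prune_step ::
  "nat \<Rightarrow> 'v set \<Rightarrow> (nat \<Rightarrow> 'v \<Rightarrow> 'v) \<Rightarrow> 'v \<Rightarrow> 'v svert set \<Rightarrow> 'v svert set \<Rightarrow> bool" where
  "prune_step q Bl sig r U U' \<longleftrightarrow>
     (\<exists>v \<in> U. v \<noteq> SW r \<and> sdeg q Bl sig U v = 1 \<and> U' = U - {v})"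

definition is_core :: "nat \<Rightarrow> 'v set \<Rightarrow> (nat \<Rightarrow> 'v \<Rightarrow> 'v) \<Rightarrow> 'v \<Rightarrow> 'v svert set \<Rightarrow> bool" where
  "is_core q Bl sig r U \<longleftrightarrow>
     (prune_step q Bl sig r)\<^sup>*\<^sup>* (S_verts q Bl sig) U \<and> \<not> (\<exists>U'. prune_step q Bl sig r U U')"

definition chain_vertex ::
  "nat \<Rightarrow> 'v set \<Rightarrow> (nat \<Rightarrow> 'v \<Rightarrow> 'v) \<Rightarrow> 'v \<Rightarrow> 'v svert set \<Rightarrow> 'v svert \<Rightarrow> bool" where
  "chain_vertex q Bl sig r U v \<longleftrightarrow> v \<in> U \<and> v \<noteq> SW r \<and> sdeg q Bl sig U v = 2"

definition core_chain ::
  "nat \<Rightarrow> 'v set \<Rightarrow> (nat \<Rightarrow> 'v \<Rightarrow> 'v) \<Rightarrow> 'v \<Rightarrow> 'v svert set \<Rightarrow> 'v svert list \<Rightarrow> bool" where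
  "core_chain q Bl sig r U vs \<longleftrightarrow>
     2 \<le> length vs \<and> set vs \<subseteq> U \<and>
     (\<forall>j < length vs - 1. S_adj q Bl sig (vs ! j) (vs ! (j + 1))) \<and>
     distinct (map (\<lambda>j. {vs ! j, vs ! (j + 1)}) [0..<length vs - 1]) \<and>
     distinct (butlast (tl vs)) \<and>
     hd vs \<notin> set (butlast (tl vs)) \<and> last vs \<notin> set (butlast (tl vs)) \<and>
     (\<forall>v \<in> set (butlast (tl vs)). chain_vertex q Bl sig r U v) \<and>
     \<not> chain_vertex q Bl sig r U (hd vs) \<and> \<not> chain_vertex q Bl sig r U (last vs)"

end

theory Submission
  imports Defs
begin

definition RR :: "nat \<Rightarrow> 'v set \<Rightarrow> (nat \<Rightarrow> 'v \<Rightarrow> 'v) \<Rightarrow> ('v \<times> 'v) set" where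
  "RR q Bl sig = (col_edges {1..q} Bl sig \<union> (col_edges {1..q} Bl sig)\<inverse>)\<^sup>*"

lemma RR_sym: "(x,y) \<in> RR q Bl sig \<Longrightarrow> (y,x) \<in> RR q Bl sig"
  unfolding RR_def by (metis sym_Un_converse sym_rtrancl symD)

lemma RR_trans: "(x,y) \<in> RR q Bl sig \<Longrightarrow> (y,z) \<in> RR q Bl sig \<Longrightarrow> (x,z) \<in> RR q Bl sig"
  unfolding RR_def by (rule rtrancl_trans)

lemma RR_refl: "(x,x) \<in> RR q Bl sig"
  unfolding RR_def by simp

lemma RR_edge: "1 \<le> i \<Longrightarrow> i \<le> q \<Longrightarrow> b \<in> Bl \<Longrightarrow> (b, sig i b) \<in> RR q Bl sig"
  unfolding RR_def col_edges_def by (rule r_into_rtrancl) auto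

lemma not_SYK_bad:
  assumes "rooted_bip_colored q Bl Wh sig r" "\<not> SYK q Bl Wh sig"
  shows "\<exists>b\<in>Bl. (b, sig 0 b) \<notin> RR q Bl sig"
proof (rule ccontr)
  assume "\<not> ?thesis"
  hence g: "\<forall>b\<in>Bl. (b, sig 0 b) \<in> RR q Bl sig" by blast
  let ?E = "col_edges {0..q} Bl sig"
  have E: "?E \<subseteq> RR q Bl sig"
  proof
    fix e assume "e \<in> ?E"
    then obtain i b where e: "e = (b, sig i b)" "i \<le> q" "b \<in> Bl" unfolding col_edges_def by force
    show "e \<in> RR q Bl sig"
    proof (cases "i = 0")
      case True thus ?thesis using g e by auto
    next
      case False thus ?thesis using e RR_edge[of i q b Bl sig] by auto
    qed
  qed
  have "?E \<union> ?E\<inverse> \<subseteq> RR q Bl sig"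
  proof
    fix e assume "e \<in> ?E \<union> ?E\<inverse>"
    thus "e \<in> RR q Bl sig"
    proof
      assume "e \<in> ?E" thus ?thesis using E by (rule rev_subsetD)
    next
      assume "e \<in> ?E\<inverse>"
      then obtain x y where xy: "e = (x,y)" "(y,x) \<in> ?E" by auto
      have "(y,x) \<in> RR q Bl sig" using E xy(2) by (rule subsetD)
      thus ?thesis using xy(1) RR_sym by simp
    qed
  qed
  hence "(?E \<union> ?E\<inverse>)\<^sup>* \<subseteq> (RR q Bl sig)\<^sup>*" by (rule rtrancl_mono)
  also have "... = RR q Bl sig" unfolding RR_def by simp
  finally have sub: "(?E \<union> ?E\<inverse>)\<^sup>* \<subseteq> RR q Bl sig" .
  have cc: "\<forall>x\<in>Bl\<union>Wh. \<forall>y\<in>Bl\<union>Wh. (x,y) \<in> (?E \<union> ?E\<inverse>)\<^sup>*"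
    using assms(1) unfolding rooted_bip_colored_def col_connected_def by simp
  have "\<forall>x\<in>Bl\<union>Wh. \<forall>y\<in>Bl\<union>Wh. (x,y) \<in> RR q Bl sig"
    using cc sub by (meson subsetD)
  hence "col_connected {1..q} Bl Wh sig"
    unfolding col_connected_def RR_def by simp
  thus False using assms(2) unfolding SYK_def by simp
qed

lemma funpow_in: "f ` A \<subseteq> A \<Longrightarrow> x \<in> A \<Longrightarrow> (f^^n) x \<in> A"
  by (induction n) auto

lemma funpow_inj_on: assumes "inj_on f A" "f ` A \<subseteq> A" shows "inj_on (f^^n) A"
proof (induction n)
  case 0 thus ?case by simp
next
  case (Suc n)
  have "(f^^n) ` A \<subseteq> A" using funpow_in[OF assms(2)] by blast
  hence i2: "inj_on f ((f^^n) ` A)" using assms(1) inj_on_subset by blast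
  show ?case using comp_inj_on[OF Suc.IH i2] by (simp add: comp_def)
qed

lemma periodic:
  assumes "inj_on f A" "f ` A \<subseteq> A" "finite A" "x \<in> A"
  shows "\<exists>p>0. (f^^p) x = x"
proof -
  have "\<not> inj_on (\<lambda>n. (f^^n) x) {..card A}"
  proof
    assume inj: "inj_on (\<lambda>n. (f^^n) x) {..card A}"
    have "(\<lambda>n. (f^^n) x) ` {..card A} \<subseteq> A" using funpow_in[OF assms(2) assms(4)] by blast
    from card_inj_on_le[OF inj this assms(3)] show False by simp
  qed
  then obtain m n where mn: "m \<noteq> n" "(f^^m) x = (f^^n) x"
    unfolding inj_on_def by auto
  have key: "\<And>m n. m < n \<Longrightarrow> (f^^m) x = (f^^n) x \<Longrightarrow> \<exists>p>0. (f^^p) x = x"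
  proof -
    fix m n :: nat assume mn: "m < n" "(f^^m) x = (f^^n) x"
    have "f^^n = f^^m \<circ> f^^(n-m)" using mn(1) by (metis funpow_add le_add_diff_inverse less_imp_le)
    hence "(f^^m) x = (f^^m) ((f^^(n-m)) x)" using mn(2) by simp
    moreover have "(f^^(n-m)) x \<in> A" using funpow_in[OF assms(2) assms(4)] .
    ultimately have "(f^^(n-m)) x = x" using funpow_inj_on[OF assms(1,2), of m] assms(4)
      unfolding inj_on_def by metis
    thus "\<exists>p>0. (f^^p) x = x" using \<open>m<n\<close> by (intro exI[of _ "n-m"]) auto
  qed
  show ?thesis using mn key by (metis linorder_neqE_nat)
qed

lemma funpow_mult_fix: "(f^^p) x = x \<Longrightarrow> (f^^(k*p)) x = x"
proof (induction k)
  case 0 thus ?case by simp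
next
  case (Suc k)
  have "f^^(Suc k * p) = f^^p \<circ> f^^(k*p)" by (simp add: funpow_add)
  thus ?case using Suc by simp
qed

lemma orbit_eq:
  assumes "p > 0" "(f^^p) x = x"
  shows "{(f^^m) ((f^^n) x) | m. True} = {(f^^m) x | m. True}"
proof
  show "{(f^^m) ((f^^n) x) | m. True} \<subseteq> {(f^^m) x | m. True}"
  proof
    fix y assume "y \<in> {(f^^m) ((f^^n) x) | m. True}"
    then obtain m where "y = (f^^m) ((f^^n) x)" by auto
    hence "y = (f^^(m+n)) x" by (simp add: funpow_add)
    thus "y \<in> {(f^^m) x | m. True}" by blast
  qed
next
  show "{(f^^m) x | m. True} \<subseteq> {(f^^m) ((f^^n) x) | m. True}"
  proof
    fix y assume "y \<in> {(f^^m) x | m. True}"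
    then obtain m where y: "y = (f^^m) x" by auto
    have np: "n \<le> n*p" using assms(1) by simp
    have "(f^^(m + n*p)) x = (f^^m) ((f^^(n*p)) x)" by (simp add: funpow_add)
    also have "... = (f^^m) x" using funpow_mult_fix[OF assms(2)] by (simp add: mult.commute)
    finally have e1: "y = (f^^(m + n*p)) x" using y by simp
    have ar: "m + n*p = (m + n*p - n) + n" using np by linarith
    have "(f^^(m + n*p)) x = (f^^((m + n*p - n) + n)) x"
      using ar by (rule arg_cong[where f="\<lambda>k. (f^^k) x"])
    also have "... = (f^^(m + n*p - n)) ((f^^n) x)" by (simp only: funpow_add comp_apply)
    finally have "(f^^(m + n*p)) x = (f^^(m + n*p - n)) ((f^^n) x)" .
    thus "y \<in> {(f^^m) ((f^^n) x) | m. True}" using e1 by blast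
  qed
qed

lemma pi_facts:
  assumes "bij_betw (sig 0) Bl Wh" "bij_betw (sig i) Bl Wh" "c \<in> Bl"
  shows "cperm Bl sig i c \<in> Bl" "sig 0 (cperm Bl sig i c) = sig i c"
proof -
  have w: "sig i c \<in> sig 0 ` Bl"
    using assms bij_betw_imp_surj_on bij_betw_apply by metis
  show "cperm Bl sig i c \<in> Bl" unfolding cperm_def using inv_into_into[OF w] by simp
  show "sig 0 (cperm Bl sig i c) = sig i c" unfolding cperm_def using f_inv_into_f[OF w] by simp
qed

lemma pi_inj:
  assumes "bij_betw (sig 0) Bl Wh" "bij_betw (sig i) Bl Wh"
  shows "inj_on (cperm Bl sig i) Bl"
proof -
  have "inj_on (inv_into Bl (sig 0)) Wh"
    using assms(1) by (simp add: bij_betw_imp_surj_on inj_on_inv_into)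
  hence "inj_on (inv_into Bl (sig 0)) (sig i ` Bl)" using assms(2) bij_betw_imp_surj_on by metis
  thus ?thesis unfolding cperm_def using comp_inj_on assms(2) bij_betw_imp_inj_on by blast
qed

lemma bad_orbit:
  assumes rb: "rooted_bip_colored q Bl Wh sig r" and i: "1 \<le> i" "i \<le> q"
    and b: "b \<in> Bl" "(b, sig 0 b) \<notin> RR q Bl sig"
  shows "\<exists>c\<in>Bl. c \<noteq> b \<and> (c, sig 0 c) \<notin> RR q Bl sig \<and> corbit Bl sig i c = corbit Bl sig i b"
proof -
  let ?pi = "cperm Bl sig i"
  have b0: "bij_betw (sig 0) Bl Wh" and bi: "bij_betw (sig i) Bl Wh"
    using rb i unfolding rooted_bip_colored_def by auto
  have fin: "finite Bl" using rb unfolding rooted_bip_colored_def by auto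
  have sub: "?pi ` Bl \<subseteq> Bl" using pi_facts[OF b0 bi] by blast
  obtain p where p: "p > 0" "(?pi^^p) b = b"
    using periodic[OF pi_inj[OF b0 bi] sub fin b(1)] by blast
  have inBl: "\<And>n. (?pi^^n) b \<in> Bl" using funpow_in[OF sub b(1)] .
  show ?thesis
  proof (rule ccontr)
    assume na: "\<not> ?thesis"
    have good: "\<And>n. (?pi^^n) b \<noteq> b \<Longrightarrow> ((?pi^^n) b, sig 0 ((?pi^^n) b)) \<in> RR q Bl sig"
    proof (rule ccontr)
      fix n assume ne: "(?pi^^n) b \<noteq> b" and nr: "((?pi^^n) b, sig 0 ((?pi^^n) b)) \<notin> RR q Bl sig"
      have "corbit Bl sig i ((?pi^^n) b) = corbit Bl sig i b"
        unfolding corbit_def using orbit_eq[OF p] by blast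
      thus False using na ne nr inBl by blast
    qed
    have all: "\<And>n. ((?pi^^n) b, b) \<in> RR q Bl sig"
    proof -
      fix n show "((?pi^^n) b, b) \<in> RR q Bl sig"
      proof (induction n)
        case 0 thus ?case by (simp add: RR_refl)
      next
        case (Suc n)
        let ?c = "(?pi^^n) b"
        have eq: "(?pi^^Suc n) b = ?pi ?c" by simp
        show ?case
        proof (cases "(?pi^^Suc n) b = b")
          case True thus ?thesis by (simp add: RR_refl)
        next
          case False
          have g1: "(?pi ?c, sig 0 (?pi ?c)) \<in> RR q Bl sig" using good[OF False] eq by simp
          have "sig 0 (?pi ?c) = sig i ?c" using pi_facts(2)[OF b0 bi inBl] .
          moreover have "(?c, sig i ?c) \<in> RR q Bl sig" using RR_edge[OF i inBl] .
          ultimately have "(?pi ?c, ?c) \<in> RR q Bl sig" using g1 RR_sym RR_trans by metis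
          thus ?thesis using Suc eq RR_trans by metis
        qed
      qed
    qed
    obtain k where k: "p = Suc k" using p(1) by (cases p) auto
    let ?c = "(?pi^^k) b"
    have "?pi ?c = b" using p(2) k by simp
    hence "sig 0 b = sig i ?c" using pi_facts(2)[OF b0 bi inBl] by metis
    moreover have "(?c, sig i ?c) \<in> RR q Bl sig" using RR_edge[OF i inBl] .
    ultimately have "(b, sig 0 b) \<in> RR q Bl sig" using all[of k] RR_sym RR_trans by metis
    thus False using b(2) by simp
  qed
qed

lemma adj_SW: "S_adj q Bl sig (SW b) u \<longleftrightarrow> b \<in> Bl \<and> (\<exists>i. 1 \<le> i \<and> i \<le> q \<and> u = SC i (corbit Bl sig i b))"
  unfolding S_adj_def by auto

lemma adj_SC: "S_adj q Bl sig (SC i Ob) u \<Longrightarrow> u \<in> SW ` Bl"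
  unfolding S_adj_def by auto

lemma adj_sym: "S_adj q Bl sig x y \<Longrightarrow> S_adj q Bl sig y x"
  unfolding S_adj_def by blast

lemma adj_SC_SW: "1 \<le> i \<Longrightarrow> i \<le> q \<Longrightarrow> b \<in> Bl \<Longrightarrow> S_adj q Bl sig (SC i (corbit Bl sig i b)) (SW b)"
  unfolding S_adj_def by blast

definition Hset :: "nat \<Rightarrow> 'v set \<Rightarrow> (nat \<Rightarrow> 'v \<Rightarrow> 'v) \<Rightarrow> 'v svert set" where
  "Hset q Bl sig = SW ` {b\<in>Bl. (b, sig 0 b) \<notin> RR q Bl sig} \<union>
     {SC i (corbit Bl sig i b) | i b. 1 \<le> i \<and> i \<le> q \<and> b \<in> Bl \<and> (b, sig 0 b) \<notin> RR q Bl sig}"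

lemma sdeg_bad_white:
  assumes "Hset q Bl sig \<subseteq> U" "b \<in> Bl" "(b, sig 0 b) \<notin> RR q Bl sig"
  shows "sdeg q Bl sig U (SW b) = q"
proof -
  have sub1: "(\<lambda>i. SC i (corbit Bl sig i b)) ` {1..q} \<subseteq> U"
  proof
    fix v assume "v \<in> (\<lambda>i. SC i (corbit Bl sig i b)) ` {1..q}"
    then obtain i where i: "1 \<le> i" "i \<le> q" "v = SC i (corbit Bl sig i b)" by auto
    hence "v \<in> {SC i (corbit Bl sig i b) | i b. 1 \<le> i \<and> i \<le> q \<and> b \<in> Bl \<and> (b, sig 0 b) \<notin> RR q Bl sig}"
      using assms(2,3) by blast
    thus "v \<in> U" using assms(1) unfolding Hset_def by blast
  qed
  have "{u \<in> U. S_adj q Bl sig (SW b) u} = (\<lambda>i. SC i (corbit Bl sig i b)) ` {1..q}"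
    using sub1 assms(2) unfolding adj_SW by auto
  moreover have "inj_on (\<lambda>i. SC i (corbit Bl sig i b)) {1..q}" by (auto simp: inj_on_def)
  ultimately show ?thesis unfolding sdeg_def by (simp add: card_image)
qed

lemma sdeg_bad_col:
  assumes rb: "rooted_bip_colored q Bl Wh sig r" and H: "Hset q Bl sig \<subseteq> U"
    and i: "1 \<le> i" "i \<le> q" and b: "b \<in> Bl" "(b, sig 0 b) \<notin> RR q Bl sig"
  shows "2 \<le> sdeg q Bl sig U (SC i (corbit Bl sig i b))"
proof -
  obtain c where c: "c \<in> Bl" "c \<noteq> b" "(c, sig 0 c) \<notin> RR q Bl sig" "corbit Bl sig i c = corbit Bl sig i b"
    using bad_orbit[OF rb i b] by blast
  let ?N = "{u \<in> U. S_adj q Bl sig (SC i (corbit Bl sig i b)) u}"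
  have fin: "finite ?N"
  proof (rule finite_subset)
    show "?N \<subseteq> SW ` Bl" using adj_SC by blast
    show "finite (SW ` Bl)" using rb unfolding rooted_bip_colored_def by simp
  qed
  have SWB: "SW ` {b\<in>Bl. (b, sig 0 b) \<notin> RR q Bl sig} \<subseteq> U" using H unfolding Hset_def by (rule Un_subset_iff[THEN iffD1, THEN conjunct1])
  have "SW b \<in> U" using SWB b by blast
  hence "SW b \<in> ?N" using adj_SC_SW[where sig=sig, OF i b(1)] by simp
  moreover have "SW c \<in> U" using SWB c(1,3) by blast
  hence "SW c \<in> ?N" using adj_SC_SW[where sig=sig, OF i c(1)] c(4) by simp
  ultimately have "{SW b, SW c} \<subseteq> ?N" by blast
  from card_mono[OF fin this] have "card {SW b, SW c} \<le> card ?N" .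
  thus ?thesis using c(2) unfolding sdeg_def by simp
qed

lemma H_invariant:
  assumes rb: "rooted_bip_colored q Bl Wh sig r" and q: "3 \<le> q"
    and st: "(prune_step q Bl sig r)\<^sup>*\<^sup>* X U" and H: "Hset q Bl sig \<subseteq> X"
  shows "Hset q Bl sig \<subseteq> U"
  using st
proof (induction rule: rtranclp_induct)
  case base thus ?case using H .
next
  case (step U U')
  obtain v where v: "v \<in> U" "sdeg q Bl sig U v = 1" "U' = U - {v}"
    using step.hyps(2) unfolding prune_step_def by blast
  have "v \<notin> Hset q Bl sig"
  proof
    assume "v \<in> Hset q Bl sig"
    then consider (w) b where "v = SW b" "b \<in> Bl" "(b, sig 0 b) \<notin> RR q Bl sig"
      | (c) i b where "v = SC i (corbit Bl sig i b)" "1 \<le> i" "i \<le> q" "b \<in> Bl" "(b, sig 0 b) \<notin> RR q Bl sig"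
      unfolding Hset_def by blast
    thus False
    proof cases
      case w thus False using sdeg_bad_white[OF step.IH w(2,3)] v(2) q by simp
    next
      case c thus False using sdeg_bad_col[OF rb step.IH c(2-5)] v(2) by simp
    qed
  qed
  thus ?case using step.IH v(3) by blast
qed

lemma H_sub_S: "Hset q Bl sig \<subseteq> S_verts q Bl sig"
  unfolding Hset_def S_verts_def by blast

lemma internal_conv:
  "x \<in> set (butlast (tl vs)) \<longleftrightarrow> (\<exists>j. 1 \<le> j \<and> j + 2 \<le> length vs \<and> x = vs ! j)"
proof
  assume "x \<in> set (butlast (tl vs))"
  then obtain k where k: "k < length (butlast (tl vs))" "x = butlast (tl vs) ! k"
    by (auto simp: in_set_conv_nth)
  hence "x = vs ! (k+1)" "k + 1 + 2 \<le> length vs"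
    by (auto simp: nth_butlast nth_tl)
  thus "\<exists>j. 1 \<le> j \<and> j + 2 \<le> length vs \<and> x = vs ! j" by (intro exI[of _ "k+1"]) auto
next
  assume "\<exists>j. 1 \<le> j \<and> j + 2 \<le> length vs \<and> x = vs ! j"
  then obtain j where j: "1 \<le> j" "j + 2 \<le> length vs" "x = vs ! j" by blast
  have "j - 1 < length (butlast (tl vs))" using j by simp
  moreover have "butlast (tl vs) ! (j - 1) = vs ! j" using j by (simp add: nth_butlast nth_tl)
  ultimately show "x \<in> set (butlast (tl vs))" using j(3) by (metis nth_mem)
qed

lemma key_contra:
  assumes rb: "rooted_bip_colored q Bl Wh sig r" and q: "3 \<le> q"
    and H: "Hset q Bl sig \<subseteq> U" and b0: "b0 \<in> Bl" "(b0, sig 0 b0) \<notin> RR q Bl sig"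
    and xy: "S_adj q Bl sig (SW b0) y" and yz: "S_adj q Bl sig y z"
    and yU: "y \<in> U" and zU: "z \<in> U" and zx: "z \<noteq> SW b0"
    and dy: "sdeg q Bl sig U y = 2" and dz: "sdeg q Bl sig U z = 2"
  shows False
proof -
  obtain i where i: "1 \<le> i" "i \<le> q" "y = SC i (corbit Bl sig i b0)" using xy unfolding adj_SW by blast
  obtain c where c: "c \<in> Bl" "c \<noteq> b0" "(c, sig 0 c) \<notin> RR q Bl sig" "corbit Bl sig i c = corbit Bl sig i b0"
    using bad_orbit[OF rb i(1,2) b0] by blast
  let ?N = "{u \<in> U. S_adj q Bl sig y u}"
  have fin: "finite ?N"
  proof (rule finite_subset)
    show "?N \<subseteq> SW ` Bl" using adj_SC i(3) by blast
    show "finite (SW ` Bl)" using rb unfolding rooted_bip_colored_def by simp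
  qed
  have xN: "SW b0 \<in> ?N" using H b0 adj_sym[OF xy] unfolding Hset_def by blast
  have zN: "z \<in> ?N" using zU yz by blast
  have cU: "SW c \<in> U" using H c unfolding Hset_def by blast
  have cN: "SW c \<in> ?N" using cU adj_SC_SW[where sig=sig, OF i(1,2) c(1)] c(4) i(3) by simp
  have "SW c = z"
  proof (rule ccontr)
    assume "SW c \<noteq> z"
    hence "card {SW b0, z, SW c} = 3" using zx c(2) by auto
    moreover have "{SW b0, z, SW c} \<subseteq> ?N" using xN zN cN by blast
    ultimately have "3 \<le> card ?N" using card_mono[OF fin] by metis
    thus False using dy unfolding sdeg_def by simp
  qed
  hence "sdeg q Bl sig U z = q" using sdeg_bad_white[OF H c(1,3)] by simp
  thus False using dz q by simp
qed

theorem mainTheorem10: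
  fixes q :: nat and Bl Wh :: "'v set" and sig :: "nat \<Rightarrow> 'v \<Rightarrow> 'v" and r :: 'v
    and U :: "'v svert set"
  assumes "3 \<le> q"
    and "rooted_bip_colored q Bl Wh sig r"
    and "is_core q Bl sig r U"
    and "\<forall>w \<in> U. w \<in> SW ` Bl \<longrightarrow>
           sdeg q Bl sig U w < q \<or>
           (\<exists>vs. core_chain q Bl sig r U vs \<and> (w = hd vs \<or> w = last vs) \<and>
                  (\<exists>u \<in> set (butlast (tl vs)). u \<in> SW ` Bl))"
  shows "SYK q Bl Wh sig"
proof (rule ccontr)
  assume ns: "\<not> SYK q Bl Wh sig"
  obtain b0 where b0: "b0 \<in> Bl" "(b0, sig 0 b0) \<notin> RR q Bl sig"
    using not_SYK_bad[OF assms(2) ns] by blast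
  have H: "Hset q Bl sig \<subseteq> U"
    using H_invariant[OF assms(2) assms(1) _ H_sub_S] assms(3) unfolding is_core_def by blast
  have wU: "SW b0 \<in> U" using H b0 unfolding Hset_def by blast
  have "sdeg q Bl sig U (SW b0) = q" using sdeg_bad_white[OF H b0] .
  then obtain vs where ch: "core_chain q Bl sig r U vs" and w: "SW b0 = hd vs \<or> SW b0 = last vs"
    and u: "\<exists>u \<in> set (butlast (tl vs)). u \<in> SW ` Bl"
    using assms(4) wU b0 by fastforce
  let ?n = "length vs"
  note cc = ch[unfolded core_chain_def]
  have n2: "2 \<le> ?n" using cc by blast
  have adj: "\<And>j. j < ?n - 1 \<Longrightarrow> S_adj q Bl sig (vs ! j) (vs ! (j + 1))" using cc by blast
  have hdn: "hd vs \<notin> set (butlast (tl vs))" using cc by blast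
  have lastn: "last vs \<notin> set (butlast (tl vs))" using cc by blast
  have cv: "\<And>v. v \<in> set (butlast (tl vs)) \<Longrightarrow> chain_vertex q Bl sig r U v" using cc by blast
  have ne: "vs \<noteq> []" using n2 by auto
  obtain uu where uu: "uu \<in> set (butlast (tl vs))" "uu \<in> SW ` Bl" using u by blast
  obtain c where uc: "uu = SW c" using uu(2) by blast
  obtain j where j0: "1 \<le> j" "j + 2 \<le> ?n" "uu = vs ! j" using internal_conv[THEN iffD1, OF uu(1)] by blast
  have j: "1 \<le> j" "j + 2 \<le> ?n" "vs ! j = SW c" using j0 uc by auto
  have intl: "\<And>k. 1 \<le> k \<Longrightarrow> k + 2 \<le> ?n \<Longrightarrow> vs ! k \<in> set (butlast (tl vs))"
    by (rule internal_conv[THEN iffD2]) blast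
  have cvU: "\<And>k. 1 \<le> k \<Longrightarrow> k + 2 \<le> ?n \<Longrightarrow> vs ! k \<in> U \<and> sdeg q Bl sig U (vs ! k) = 2"
  proof -
    fix k :: nat assume k: "1 \<le> k" "k + 2 \<le> ?n"
    have "chain_vertex q Bl sig r U (vs ! k)" by (rule cv[OF intl[OF k]])
    thus "vs ! k \<in> U \<and> sdeg q Bl sig U (vs ! k) = 2" unfolding chain_vertex_def by blast
  qed
  from w show False
  proof
    assume wh: "SW b0 = hd vs"
    hence w0: "vs ! 0 = SW b0" using ne by (simp add: hd_conv_nth)
    have a01: "S_adj q Bl sig (SW b0) (vs ! 1)" using adj[of 0] n2 w0 by simp
    have "j \<noteq> 1" using a01 j(3) unfolding adj_SW by auto
    hence n4: "4 \<le> ?n" using j by simp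
    have a12: "S_adj q Bl sig (vs ! 1) (vs ! 2)" using adj[of 1] n4 by (simp add: numeral_2_eq_2)
    have "vs ! 2 \<noteq> SW b0" using intl[of 2] n4 hdn wh by auto
    thus False using key_contra[OF assms(2) assms(1) H b0 a01 a12] cvU[of 1] cvU[of 2] n4 by simp
  next
    assume wl: "SW b0 = last vs"
    hence w0: "vs ! (?n - 1) = SW b0" using ne by (simp add: last_conv_nth)
    have "S_adj q Bl sig (vs ! (?n - 2)) (vs ! (?n - 2 + 1))" using adj[of "?n - 2"] n2 by simp
    moreover have "?n - 2 + 1 = ?n - 1" using n2 by simp
    ultimately have a1: "S_adj q Bl sig (SW b0) (vs ! (?n - 2))" using w0 adj_sym by metis
    have "j \<noteq> ?n - 2" using a1 j(3) unfolding adj_SW by auto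
    hence n4: "4 \<le> ?n" using j by simp
    have "S_adj q Bl sig (vs ! (?n - 3)) (vs ! (?n - 3 + 1))" using adj[of "?n - 3"] n4 by simp
    moreover have "?n - 3 + 1 = ?n - 2" using n4 by simp
    ultimately have a2: "S_adj q Bl sig (vs ! (?n - 2)) (vs ! (?n - 3))" using adj_sym by metis
    have "1 \<le> ?n - 3" "?n - 3 + 2 \<le> ?n" using n4 by auto
    hence "vs ! (?n - 3) \<in> set (butlast (tl vs))" by (rule intl)
    hence "vs ! (?n - 3) \<noteq> SW b0" using lastn wl by auto
    thus False using key_contra[OF assms(2) assms(1) H b0 a1 a2] cvU[of "?n - 2"] cvU[of "?n - 3"] n4 by simp
  qed
qed

end
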